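(* Let $G$ be an index coding problem on $n$ messages. The capacity region $\mathscr{C}$ of $G$ equals the closure of the set of all nonnegative rate tuples $(R_1,\ldots,R_n)$ for which there exists a tuple ${\bf t}=(t_1,\ldots,t_n)$ of nonnegative integers, not all zero, with \[ R_j\le \frac{t_j}{\log_2 \chi_f(\Gamma_{\bf t}(G))},\quad j\in[1:n], \] where $\chi_f$ denotes the fractional chromatic number.
   Context: Index coding: an instance with $n$ messages is specified by side information sets $A_1,\ldots,A_n$ with $A_j\subseteq[1:n]\setminus\{j\}$ (equivalently a directed side information graph $G$ on vertex set $[1:n]$ with an edge $i\to j$ iff $i\in A_j$); we identify the problem with $G$. For $x^n=(x_1,\ldots,x_n)$ write $x(A)=(x_i: i\in A)$. A $(t_1,\ldots,t_n,r)$ index code (with $t_j$ nonnegative integers and $r$ a positive integer) consists of an encoder $\phi:\prod_{i=1}^n\{0,1\}^{t_i}\to\{0,1\}^r$ and decoders $\psi_j:\{0,1\}^r\times\prod_{k\in A_j}\{0,1\}^{t_k}\to\{0,1\}^{t_j}$ such that $\psi_j(\phi(x^n),x(A_j))=x_j$ for all $x^n\in\prod_i\{0,1\}^{t_i}$ and all $j$. A nonnegative rate tuple $(R_1,\ldots,R_n)$ is achievable if there exists a $(t_1,\ldots,t_n,r)$ index code with $R_j\le t_j/r$ for all $j$. The capacity region $\mathscr{C}$ is the closure of the set of achievable rate tuples. Confusion graph: for a length tuple ${\bf t}=(t_1,\ldots,t_n)$, two message tuples $x^n,z^n\in\prod_i\{0,1\}^{t_i}$ are confusable at receiver $j$ if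 $x_j\ne z_j$ and $x_i=z_i$ for all $i\in A_j$; they are confusable if confusable at some receiver. $\Gamma_{\bf t}(G)$ is the undirected graph with vertex set $\prod_i\{0,1\}^{t_i}$ in which two vertices are adjacent iff they are confusable. The fractional chromatic number is $\chi_f(\Gamma)=\inf_b \chi^{(b)}(\Gamma)/b$, where $\chi^{(b)}(\Gamma)$ is the least number of colors in an assignment of $b$-element color sets to vertices such that adjacent vertices receive disjoint sets. *)

theory Defs
  imports "HOL-Analysis.Analysis"
begin

text \<open>Messages are indexed by a finite type 'n (so n = CARD('n)).
  Side information: A j is the set of messages known to receiver j.\<close>

definition msgs :: "('n \<Rightarrow> nat) \<Rightarrow> ('n \<Rightarrow> bool list) set" where
  "msgs t = {x. \<forall>i. length (x i) = t i}"

definition index_code ::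
  "('n \<Rightarrow> 'n set) \<Rightarrow> ('n \<Rightarrow> nat) \<Rightarrow> nat \<Rightarrow>
   (('n \<Rightarrow> bool list) \<Rightarrow> bool list) \<Rightarrow>
   ('n \<Rightarrow> bool list \<Rightarrow> ('n \<Rightarrow> bool list) \<Rightarrow> bool list) \<Rightarrow> bool" where
  "index_code A t r \<phi> \<psi> \<longleftrightarrow> r > 0 \<and>
     (\<forall>x\<in>msgs t. length (\<phi> x) = r) \<and>
     (\<forall>j. \<forall>x\<in>msgs t. \<psi> j (\<phi> x) (restrict x (A j)) = x j)"

definition achievable :: "('n::finite \<Rightarrow> 'n set) \<Rightarrow> real^'n \<Rightarrow> bool" where
  "achievable A R \<longleftrightarrow> (\<forall>j. R $ j \<ge> 0) \<and>
     (\<exists>t r \<phi> \<psi>. index_code A t r \<phi> \<psi> \<and> (\<forall>j. R $ j \<le> real (t j) / real r))"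

definition capacity_region :: "('n::finite \<Rightarrow> 'n set) \<Rightarrow> (real^'n) set" where
  "capacity_region A = closure {R. achievable A R}"

text \<open>Confusion graph: vertex set msgs t, adjacency = confusability.\<close>
definition confusable :: "('n \<Rightarrow> 'n set) \<Rightarrow> ('n \<Rightarrow> bool list) \<Rightarrow> ('n \<Rightarrow> bool list) \<Rightarrow> bool" where
  "confusable A x z \<longleftrightarrow> (\<exists>j. x j \<noteq> z j \<and> (\<forall>i\<in>A j. x i = z i))"

definition b_fold_colorable :: "'v set \<Rightarrow> ('v \<Rightarrow> 'v \<Rightarrow> bool) \<Rightarrow> nat \<Rightarrow> nat \<Rightarrow> bool" where
  "b_fold_colorable V E b k \<longleftrightarrow> (\<exists>c :: 'v \<Rightarrow> nat set.
     (\<forall>v\<in>V. c v \<subseteq> {..<k} \<and> card (c v) = b) \<and>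
     (\<forall>u\<in>V. \<forall>v\<in>V. E u v \<longrightarrow> c u \<inter> c v = {}))"

definition b_fold_chromatic :: "'v set \<Rightarrow> ('v \<Rightarrow> 'v \<Rightarrow> bool) \<Rightarrow> nat \<Rightarrow> nat" where
  "b_fold_chromatic V E b = (LEAST k. b_fold_colorable V E b k)"

definition frac_chromatic :: "'v set \<Rightarrow> ('v \<Rightarrow> 'v \<Rightarrow> bool) \<Rightarrow> real" where
  "frac_chromatic V E = (INF b\<in>{b::nat. b \<ge> 1}. real (b_fold_chromatic V E b) / real b)"

definition chi_f_confusion :: "('n \<Rightarrow> 'n set) \<Rightarrow> ('n \<Rightarrow> nat) \<Rightarrow> real" where
  "chi_f_confusion A t = frac_chromatic (msgs t) (confusable A)"

end

theory Submission
  imports Defs "HOL-Real_Asymp.Real_Asymp"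
begin


lemma colorable_exists:
  assumes "finite V" "\<And>v. v \<in> V \<Longrightarrow> \<not> E v v"
  shows "b_fold_colorable V E b (b * card V)"
proof -
  obtain f where f: "bij_betw f V {..<card V}"
    using assms(1) by (metis ex_bij_betw_finite_nat atLeast0LessThan)
  define c where "c v = {f v * b ..< f v * b + b}" for v
  have "c v \<subseteq> {..<b * card V} \<and> card (c v) = b" if "v \<in> V" for v
  proof -
    have "f v < card V" using f that by (auto simp: bij_betw_def)
    hence "f v * b + b \<le> b * card V"
      by (metis add.commute mult.commute mult_Suc_right mult_le_mono2 Suc_leI)
    thus ?thesis by (auto simp: c_def)
  qed
  moreover have "c u \<inter> c v = {}" if "u \<in> V" "v \<in> V" "E u v" for u v
  proof -
    have "u \<noteq> v" using assms(2) that by blast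
    hence ne: "f u \<noteq> f v" using f that by (auto simp: bij_betw_def inj_on_def)
    show ?thesis
    proof (rule ccontr)
      assume "c u \<inter> c v \<noteq> {}"
      then obtain y where "y \<in> c u" "y \<in> c v" by blast
      hence "f u * b \<le> y" "y < f u * b + b" "f v * b \<le> y" "y < f v * b + b"
        by (auto simp: c_def)
      hence "f u * b < f v * b + b" "f v * b < f u * b + b" by auto
      hence "f u < f v + 1" "f v < f u + 1"
        by (metis add_mult_distrib mult_1 mult_less_cancel2)+
      thus False using ne by auto
    qed
  qed
  ultimately show ?thesis unfolding b_fold_colorable_def by blast
qed

lemma colorable_chrom:
  assumes "finite V" "\<And>v. v \<in> V \<Longrightarrow> \<not> E v v"
  shows "b_fold_colorable V E b (b_fold_chromatic V E b)"
  unfolding b_fold_chromatic_def by (rule LeastI, rule colorable_exists[OF assms])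

lemma chrom_le:
  assumes "b_fold_colorable V E b k"
  shows "b_fold_chromatic V E b \<le> k"
  unfolding b_fold_chromatic_def by (rule Least_le[of "b_fold_colorable V E b", OF assms])

lemma bdd_frac: "bdd_below ((\<lambda>b. real (b_fold_chromatic V E b) / real b) ` {b::nat. b \<ge> 1})"
  by (rule bdd_belowI[of _ 0]) auto

lemma frac_le:
  assumes "b_fold_colorable V E b k" "b \<ge> 1"
  shows "frac_chromatic V E \<le> real k / real b"
proof -
  have "frac_chromatic V E \<le> real (b_fold_chromatic V E b) / real b"
    unfolding frac_chromatic_def by (rule cINF_lower[OF bdd_frac]) (use assms in auto)
  also have "\<dots> \<le> real k / real b"
    using chrom_le[OF assms(1)] by (simp add: divide_right_mono)
  finally show ?thesis .
qed

lemma colorable_edge_ge: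
  assumes "b_fold_colorable V E b k" "u \<in> V" "v \<in> V" "E u v"
  shows "2 * b \<le> k"
proof -
  obtain c where c: "\<forall>v\<in>V. c v \<subseteq> {..<k} \<and> card (c v) = b"
     "\<forall>u\<in>V. \<forall>v\<in>V. E u v \<longrightarrow> c u \<inter> c v = {}"
    using assms(1) unfolding b_fold_colorable_def by blast
  have "card (c u \<union> c v) = b + b"
    using c assms by (subst card_Un_disjoint) (auto intro: finite_subset)
  moreover have "card (c u \<union> c v) \<le> k"
    using c assms by (metis Un_subset_iff card_lessThan card_mono finite_lessThan)
  ultimately show ?thesis by simp
qed

lemma frac_ge2:
  assumes "finite V" "\<And>v. v \<in> V \<Longrightarrow> \<not> E v v" "u \<in> V" "v \<in> V" "E u v"
  shows "frac_chromatic V E \<ge> 2"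
  unfolding frac_chromatic_def
proof (rule cINF_greatest)
  show "{b::nat. b \<ge> 1} \<noteq> {}" by auto
  fix b :: nat assume "b \<in> {b. b \<ge> 1}"
  hence b: "b \<ge> 1" by simp
  have "2 * b \<le> b_fold_chromatic V E b"
    using colorable_edge_ge[OF colorable_chrom[OF assms(1,2)] assms(3-5)] .
  hence "2 * real b \<le> real (b_fold_chromatic V E b)" by linarith
  thus "2 \<le> real (b_fold_chromatic V E b) / real b" using b by (simp add: field_simps)
qed



lemma msgs_PiE: "msgs t = PiE UNIV (\<lambda>i. {xs::bool list. length xs = t i})"
  by (auto simp: msgs_def PiE_UNIV_domain)

lemma card_len: "card {xs::bool list. length xs = n} = 2 ^ n"
  using card_lists_length_eq[of "UNIV::bool set" n] by simp

lemma finite_len: "finite {xs::bool list. length xs = n}"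
  using finite_lists_length_eq[of "UNIV::bool set" n] by simp

lemma msgs_finite: "finite (msgs (t :: 'n::finite \<Rightarrow> nat))"
  unfolding msgs_PiE by (rule finite_PiE) (auto simp: finite_len)

lemma msgs_card: "card (msgs (t :: 'n::finite \<Rightarrow> nat)) = 2 ^ (\<Sum>i\<in>UNIV. t i)"
  unfolding msgs_PiE by (simp add: card_PiE card_len power_sum)

lemma conf_irrefl: "\<not> confusable A x x"
  by (simp add: confusable_def)

lemma code_coloring:
  assumes "index_code A t r \<phi> \<psi>"
  shows "b_fold_colorable (msgs t) (confusable A) 1 (2 ^ r)"
proof -
  obtain g :: "bool list \<Rightarrow> nat" where g: "bij_betw g {xs::bool list. length xs = r} {..<2^r}"
    using finite_same_card_bij[OF finite_len finite_lessThan] card_len by auto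
  have len: "\<forall>x\<in>msgs t. length (\<phi> x) = r" and dec: "\<forall>j. \<forall>x\<in>msgs t. \<psi> j (\<phi> x) (restrict x (A j)) = x j"
    using assms by (auto simp: index_code_def)
  define c where "c x = {g (\<phi> x)}" for x
  have "c v \<subseteq> {..<2^r} \<and> card (c v) = 1" if "v \<in> msgs t" for v
    using g len that by (auto simp: c_def bij_betw_def)
  moreover have "c u \<inter> c v = {}" if uv: "u \<in> msgs t" "v \<in> msgs t" "confusable A u v" for u v
  proof (rule ccontr)
    assume "c u \<inter> c v \<noteq> {}"
    hence "g (\<phi> u) = g (\<phi> v)" by (auto simp: c_def)
    hence eq: "\<phi> u = \<phi> v" using g len uv(1,2) by (auto simp: bij_betw_def inj_on_def)
    obtain j where j: "u j \<noteq> v j" "\<forall>i\<in>A j. u i = v i" using uv(3) by (auto simp: confusable_def)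
    have "restrict u (A j) = restrict v (A j)" using j by (auto simp: restrict_def)
    moreover have "\<psi> j (\<phi> u) (restrict u (A j)) = u j" using dec uv(1) by blast
    moreover have "\<psi> j (\<phi> v) (restrict v (A j)) = v j" using dec uv(2) by blast
    ultimately have "u j = v j" using eq by simp
    thus False using j by simp
  qed
  ultimately show ?thesis unfolding b_fold_colorable_def by blast
qed

lemma coloring_code:
  fixes sel :: "('n \<Rightarrow> bool list) \<Rightarrow> 'c"
  assumes "finite S" "card S \<le> 2 ^ r" "r > 0"
    and "\<And>x. x \<in> msgs t \<Longrightarrow> sel x \<in> S"
    and "\<And>x z. x \<in> msgs t \<Longrightarrow> z \<in> msgs t \<Longrightarrow> confusable A x z \<Longrightarrow> sel x \<noteq> sel z"
  shows "\<exists>\<phi> \<psi>. index_code A t r \<phi> \<psi>"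
proof -
  have "card S \<le> card {xs::bool list. length xs = r}" using assms(2) card_len by simp
  then obtain e where e: "e ` S \<subseteq> {xs::bool list. length xs = r}" "inj_on e S"
    using card_le_inj[OF assms(1) finite_len] by blast
  define \<phi> where "\<phi> x = e (sel x)" for x
  define \<psi> where "\<psi> j w y = (if \<exists>x\<in>msgs t. \<phi> x = w \<and> restrict x (A j) = y
      then (SOME x. x \<in> msgs t \<and> \<phi> x = w \<and> restrict x (A j) = y) j else [])" for j w y
  have "\<psi> j (\<phi> x) (restrict x (A j)) = x j" if x: "x \<in> msgs t" for j x
  proof -
    have ex: "\<exists>x'. x' \<in> msgs t \<and> \<phi> x' = \<phi> x \<and> restrict x' (A j) = restrict x (A j)"
      using x by blast
    define x' where "x' = (SOME x'. x' \<in> msgs t \<and> \<phi> x' = \<phi> x \<and> restrict x' (A j) = restrict x (A j))"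
    have x': "x' \<in> msgs t" "\<phi> x' = \<phi> x" "restrict x' (A j) = restrict x (A j)"
      using someI_ex[OF ex] unfolding x'_def by blast+
    have "x' j = x j"
    proof (rule ccontr)
      assume ne: "x' j \<noteq> x j"
      have "\<forall>i\<in>A j. x' i = x i" using x'(3) by (metis restrict_apply')
      hence "confusable A x' x" using ne by (auto simp: confusable_def)
      hence "sel x' \<noteq> sel x" using assms(5) x'(1) x by blast
      moreover have "sel x' = sel x" using x'(2) e(2) assms(4) x'(1) x
        by (auto simp: \<phi>_def inj_on_def)
      ultimately show False by simp
    qed
    thus ?thesis using x' x unfolding \<psi>_def x'_def by auto
  qed
  moreover have "length (\<phi> x) = r" if "x \<in> msgs t" for x
    using e assms(4) that by (auto simp: \<phi>_def)
  ultimately have "index_code A t r \<phi> \<psi>" using assms(3) by (auto simp: index_code_def)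
  thus ?thesis by blast
qed



lemma cover_step:
  fixes c :: "'v \<Rightarrow> 'c set"
  assumes "finite W" "finite Col" "Col \<noteq> {}" "\<And>v. v \<in> W \<Longrightarrow> c v \<subseteq> Col \<and> card (c v) = B"
  shows "\<exists>a\<in>Col. real B * real (card W) \<le> real (card {v\<in>W. a \<in> c v}) * real (card Col)"
proof (rule ccontr)
  assume "\<not> ?thesis"
  hence lt: "\<And>a. a \<in> Col \<Longrightarrow> real (card {v\<in>W. a \<in> c v}) * real (card Col) < real B * real (card W)"
    by force
  have "(\<Sum>a\<in>Col. card {v\<in>W. a \<in> c v}) = (\<Sum>a\<in>Col. \<Sum>v\<in>W. if a \<in> c v then 1 else (0::nat))"
    using assms(1) by (simp add: sum.If_cases Int_def)
  also have "\<dots> = (\<Sum>v\<in>W. \<Sum>a\<in>Col. if a \<in> c v then 1 else (0::nat))" by (rule sum.swap)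
  also have "\<dots> = (\<Sum>v\<in>W. card (c v))"
  proof (rule sum.cong[OF refl])
    fix v assume "v \<in> W"
    hence "c v \<subseteq> Col" using assms(4) by blast
    hence "Col \<inter> {a. a \<in> c v} = c v" by auto
    thus "(\<Sum>a\<in>Col. if a \<in> c v then 1 else (0::nat)) = card (c v)"
      using assms(2) by (simp add: sum.If_cases)
  qed
  also have "\<dots> = B * card W" using assms(4) by simp
  finally have eq: "(\<Sum>a\<in>Col. card {v\<in>W. a \<in> c v}) = B * card W" .
  have "(\<Sum>a\<in>Col. real (card {v\<in>W. a \<in> c v}) * real (card Col)) < (\<Sum>a\<in>Col. real B * real (card W))"
    by (rule sum_strict_mono[OF assms(2,3) lt])
  also have "\<dots> = real (card Col) * (real B * real (card W))" by simp
  finally have "real (\<Sum>a\<in>Col. card {v\<in>W. a \<in> c v}) * real (card Col) < real (card Col) * (real B * real (card W))"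
    by (simp add: sum_distrib_right)
  thus False unfolding eq by simp
qed

lemma cover_iter:
  fixes c :: "'v \<Rightarrow> 'c set"
  assumes "finite W" "finite Col" "Col \<noteq> {}" "\<And>v. v \<in> W \<Longrightarrow> c v \<subseteq> Col \<and> card (c v) = B"
    and "B \<le> card Col"
  shows "\<exists>S\<subseteq>Col. card S \<le> s \<and>
     real (card {v\<in>W. c v \<inter> S = {}}) \<le> (1 - real B / real (card Col)) ^ s * real (card W)"
proof (induction s)
  case 0 show ?case by (rule exI[of _ "{}"]) (auto intro: card_mono assms(1))
next
  case (Suc s)
  then obtain S where S: "S \<subseteq> Col" "card S \<le> s"
    "real (card {v\<in>W. c v \<inter> S = {}}) \<le> (1 - real B / real (card Col)) ^ s * real (card W)" by blast
  define W' where "W' = {v\<in>W. c v \<inter> S = {}}"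
  have fW': "finite W'" using assms(1) by (simp add: W'_def)
  have cW': "\<And>v. v \<in> W' \<Longrightarrow> c v \<subseteq> Col \<and> card (c v) = B" using assms(4) by (auto simp: W'_def)
  obtain a where a: "a \<in> Col" "real B * real (card W') \<le> real (card {v\<in>W'. a \<in> c v}) * real (card Col)"
    using cover_step[of W' Col c B] fW' assms(2,3) cW' by blast
  have M: "real (card Col) > 0" using assms(2,3) by (simp add: card_gt_0_iff)
  have split: "{v\<in>W. c v \<inter> insert a S = {}} = W' - {v\<in>W'. a \<in> c v}" by (auto simp: W'_def)
  have "card {v\<in>W. c v \<inter> insert a S = {}} = card W' - card {v\<in>W'. a \<in> c v}"
    unfolding split by (rule card_Diff_subset) (use fW' in auto)
  moreover have "card {v\<in>W'. a \<in> c v} \<le> card W'" by (rule card_mono[OF fW']) auto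
  ultimately have "real (card {v\<in>W. c v \<inter> insert a S = {}}) = real (card W') - real (card {v\<in>W'. a \<in> c v})"
    by simp
  also have "\<dots> \<le> real (card W') - real B * real (card W') / real (card Col)"
    using a(2) M by (simp add: field_simps)
  also have "\<dots> = (1 - real B / real (card Col)) * real (card W')" by (simp add: field_simps)
  also have "\<dots> \<le> (1 - real B / real (card Col)) * ((1 - real B / real (card Col)) ^ s * real (card W))"
  proof (rule mult_left_mono)
    show "real (card W') \<le> (1 - real B / real (card Col)) ^ s * real (card W)" using S(3) by (simp add: W'_def)
    show "0 \<le> 1 - real B / real (card Col)" using assms(5) M by (simp add: divide_le_eq)
  qed
  finally have "real (card {v\<in>W. c v \<inter> insert a S = {}}) \<le> (1 - real B / real (card Col)) ^ Suc s * real (card W)"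
    by simp
  moreover have "card (insert a S) \<le> Suc s"
  proof -
    have fS: "finite S" using S(1) assms(2) finite_subset by blast
    thus ?thesis using S(2) by (simp add: card_insert_if)
  qed
  ultimately show ?case using S(1) a(1) by (intro exI[of _ "insert a S"]) auto
qed

lemma half_bound:
  fixes p :: real and m :: nat
  assumes "0 \<le> p" "p \<le> 1" "p * m \<ge> 1"
  shows "(1 - p) ^ m \<le> 1/2"
proof -
  have "1 + m * p \<le> (1 + p) ^ m" using Bernoulli_inequality[of p m] assms by simp
  hence "2 \<le> (1 + p) ^ m" using assms by (simp add: mult.commute)
  moreover have "((1 - p) * (1 + p)) ^ m \<le> 1"
    using assms by (intro power_le_one) (auto simp: algebra_simps intro: mult_le_one)
  hence "(1 - p) ^ m * (1 + p) ^ m \<le> 1" by (simp add: power_mult_distrib)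
  ultimately have "(1 - p) ^ m * 2 \<le> 1"
    using assms by (meson dual_order.trans mult_left_mono zero_le_power diff_ge_0_iff_ge)
  thus ?thesis by simp
qed

lemma cover_full:
  fixes c :: "'v \<Rightarrow> 'c set"
  assumes "finite Col" "Col \<noteq> {}" "B \<ge> 1" "B \<le> card Col"
    and "\<And>v. v \<in> V \<Longrightarrow> c v \<subseteq> Col \<and> card (c v) = B" "finite V"
  shows "W \<subseteq> V \<Longrightarrow> card W < 2 ^ j \<Longrightarrow>
     \<exists>S\<subseteq>Col. card S \<le> nat \<lceil>real (card Col) / real B\<rceil> * j \<and> (\<forall>v\<in>W. c v \<inter> S \<noteq> {})"
proof (induction j arbitrary: W)
  case 0
  hence "W = {}" using assms(6) by (metis card_0_eq finite_subset less_one power_0)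
  thus ?case by (intro exI[of _ "{}"]) auto
next
  case (Suc j)
  let ?m = "nat \<lceil>real (card Col) / real B\<rceil>"
  let ?p = "real B / real (card Col)"
  have fW: "finite W" using Suc.prems assms(6) finite_subset by blast
  have M: "real (card Col) > 0" using assms(1,2) by (simp add: card_gt_0_iff)
  obtain S where S: "S \<subseteq> Col" "card S \<le> ?m"
     "real (card {v\<in>W. c v \<inter> S = {}}) \<le> (1 - ?p) ^ ?m * real (card W)"
    using cover_iter[OF fW assms(1,2) _ assms(4), of c ?m] assms(5) Suc.prems(1) by blast
  have "?p * ?m \<ge> 1"
  proof -
    have h: "real (card Col) / real B \<le> real ?m" by linarith
    have Bp: "real B > 0" using assms(3) by simp
    have "real (card Col) \<le> real B * real ?m" using h Bp by (metis mult.commute pos_divide_le_eq)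
    hence "real (card Col) / real (card Col) \<le> real B * real ?m / real (card Col)"
      using M by (simp add: divide_right_mono)
    thus ?thesis using M by simp
  qed
  hence "(1 - ?p) ^ ?m \<le> 1/2" using half_bound[of ?p ?m] M assms(3,4) by simp
  hence "(1 - ?p) ^ ?m * real (card W) \<le> 1/2 * real (card W)" by (rule mult_right_mono) simp
  hence "real (card {v\<in>W. c v \<inter> S = {}}) \<le> real (card W) / 2"
    using S(3) by linarith
  hence "card {v\<in>W. c v \<inter> S = {}} < 2 ^ j" using Suc.prems(2) by simp
  then obtain S' where S': "S' \<subseteq> Col" "card S' \<le> ?m * j" "\<forall>v\<in>{v\<in>W. c v \<inter> S = {}}. c v \<inter> S' \<noteq> {}"
    using Suc.IH[of "{v\<in>W. c v \<inter> S = {}}"] Suc.prems(1) by blast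
  have "card (S \<union> S') \<le> ?m * Suc j"
    using card_Un_le[of S S'] S(2) S'(2) by simp
  moreover have "\<forall>v\<in>W. c v \<inter> (S \<union> S') \<noteq> {}" using S'(3) by blast
  ultimately show ?case using S(1) S'(1) by (intro exI[of _ "S \<union> S'"]) auto
qed



definition blk :: "('n \<Rightarrow> nat) \<Rightarrow> nat \<Rightarrow> ('n \<Rightarrow> bool list) \<Rightarrow> ('n \<Rightarrow> bool list)" where
  "blk t m x = (\<lambda>i. take (t i) (drop (m * t i) (x i)))"

lemma blk_msgs:
  assumes "x \<in> msgs (\<lambda>i. k * t i)" "m < k"
  shows "blk t m x \<in> msgs t"
proof -
  have h: "t i \<le> k * t i - m * t i" for i
  proof -
    have "m * t i + t i \<le> k * t i"
      using mult_le_mono1[of "Suc m" k "t i"] assms(2) by simp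
    thus ?thesis by arith
  qed
  show ?thesis using h assms(1) by (auto simp: msgs_def blk_def min_absorb1)
qed

lemma chunks_eq:
  assumes "length xs = k * n" "length ys = k * n"
    "\<forall>m<k. take n (drop (m * n) xs) = take n (drop (m * n) ys)"
  shows "xs = ys"
proof (rule nth_equalityI)
  show "length xs = length ys" using assms by simp
  fix p assume p: "p < length xs"
  hence n: "n > 0" using assms(1) by (cases n) auto
  define m where "m = p div n"
  define q where "q = p mod n"
  have pq: "p = m * n + q" by (simp add: m_def q_def)
  have q: "q < n" using n by (simp add: q_def)
  have m: "m < k" using p assms(1) unfolding m_def
    by (metis less_mult_imp_div_less mult.commute)
  have "xs ! p = take n (drop (m * n) xs) ! q"
    using q pq p by simp
  also have "\<dots> = take n (drop (m * n) ys) ! q" using assms(3) m by simp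
  also have "\<dots> = ys ! p"
  proof -
    have "m * n \<le> k * n" using m by simp
    thus ?thesis using q pq p assms by (simp add: nth_drop)
  qed
  finally show "xs ! p = ys ! p" .
qed

lemma blk_conf:
  assumes "x \<in> msgs (\<lambda>i. k * t i)" "z \<in> msgs (\<lambda>i. k * t i)" "confusable A x z"
  shows "\<exists>m<k. confusable A (blk t m x) (blk t m z)"
proof -
  obtain j where j: "x j \<noteq> z j" "\<forall>i\<in>A j. x i = z i" using assms(3) by (auto simp: confusable_def)
  have "\<exists>m<k. take (t j) (drop (m * t j) (x j)) \<noteq> take (t j) (drop (m * t j) (z j))"
    using chunks_eq[of "x j" k "t j" "z j"] assms(1,2) j(1) by (auto simp: msgs_def)
  then obtain m where "m < k" "blk t m x j \<noteq> blk t m z j" by (auto simp: blk_def)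
  moreover have "\<forall>i\<in>A j. blk t m x i = blk t m z i" using j(2) by (simp add: blk_def)
  ultimately show ?thesis by (auto simp: confusable_def)
qed

lemma asymp_k:
  fixes T :: nat and g \<theta> :: real
  assumes "g > 0" "\<theta> > 0"
  shows "\<exists>k::nat. k \<ge> 1 \<and> \<theta> * (log 2 (real k * real T + 1) + 3) \<le> real k * g"
proof -
  define c where "c = log 2 (real T + 1) + 3"
  have "((\<lambda>k::nat. (log 2 (real k) + c) / real k) \<longlongrightarrow> 0) sequentially" by real_asymp
  moreover have "g / \<theta> > 0" using assms by simp
  ultimately have "eventually (\<lambda>k::nat. (log 2 (real k) + c) / real k < g / \<theta>) sequentially"
    by (rule order_tendstoD)
  moreover have "eventually (\<lambda>k::nat. k \<ge> 1) sequentially" by (rule eventually_ge_at_top)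
  ultimately have "eventually (\<lambda>k::nat. (log 2 (real k) + c) / real k < g / \<theta> \<and> k \<ge> 1) sequentially"
    by (rule eventually_conj)
  then obtain N :: nat where "\<forall>n\<ge>N. (log 2 (real n) + c) / real n < g / \<theta> \<and> n \<ge> 1"
    by (auto simp: eventually_sequentially)
  then obtain k :: nat where k: "(log 2 (real k) + c) / real k < g / \<theta>" "k \<ge> 1" by blast
  have kp: "real k > 0" using k by simp
  have "real k * real T + 1 \<le> real k * (real T + 1)" using k by (simp add: algebra_simps)
  hence "log 2 (real k * real T + 1) \<le> log 2 (real k * (real T + 1))"
  proof -
    have "0 \<le> real k * real T" by simp
    hence "0 < real k * real T + 1" by linarith
    thus ?thesis using kp \<open>real k * real T + 1 \<le> real k * (real T + 1)\<close>
      by (subst log_le_cancel_iff) auto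
  qed
  also have "\<dots> = log 2 (real k) + log 2 (real T + 1)" using kp by (simp add: log_mult)
  finally have "log 2 (real k * real T + 1) + 3 \<le> log 2 (real k) + c" by (simp add: c_def)
  moreover have "log 2 (real k) + c < real k * (g / \<theta>)" using k(1) kp by (simp add: field_simps)
  ultimately have "log 2 (real k * real T + 1) + 3 \<le> real k * g / \<theta>" by simp
  hence "\<theta> * (log 2 (real k * real T + 1) + 3) \<le> real k * g" using assms(2) by (simp add: field_simps)
  thus ?thesis using k(2) by blast
qed



lemma achieve:
  fixes A :: "'n::finite \<Rightarrow> 'n set" and t :: "'n \<Rightarrow> nat"
  assumes irr: "\<And>j. j \<notin> A j" and tnz: "t \<noteq> (\<lambda>_. 0)" and th: "0 < \<theta>" "\<theta> < 1"
  shows "\<exists>k r \<phi> \<psi>. index_code A (\<lambda>i. k * t i) r \<phi> \<psi> \<and>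
            \<theta> * real r \<le> real k * log 2 (chi_f_confusion A t)"
proof -
  obtain j0 where j0: "t j0 \<noteq> 0" using tnz by auto
  define x0 where "x0 = (\<lambda>i. replicate (t i) False)"
  define z0 where "z0 = x0(j0 := replicate (t j0) True)"
  have x0: "x0 \<in> msgs t" and z0: "z0 \<in> msgs t" by (auto simp: msgs_def x0_def z0_def)
  have xz: "confusable A x0 z0"
    unfolding confusable_def
  proof (intro exI[of _ j0] conjI)
    show "x0 j0 \<noteq> z0 j0" using j0 by (cases "t j0") (auto simp: x0_def z0_def)
    show "\<forall>i\<in>A j0. x0 i = z0 i" using irr by (auto simp: z0_def)
  qed
  have irrE: "\<And>v. v \<in> msgs t \<Longrightarrow> \<not> confusable A v v" by (simp add: conf_irrefl)
  define F where "F = chi_f_confusion A t"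
  have F2: "F \<ge> 2" unfolding F_def chi_f_confusion_def
    by (rule frac_ge2[of "msgs t" "confusable A" x0 z0]) (use x0 z0 xz msgs_finite irrE in auto)
  define L where "L = log 2 F"
  have L1: "L \<ge> 1"
  proof -
    have "log 2 2 \<le> log 2 F" using F2 by (subst log_le_cancel_iff) auto
    thus ?thesis by (simp add: L_def)
  qed
  have "F powr 1 < F powr (1/\<theta>)" using th F2 by (intro powr_less_mono) (auto simp: field_simps)
  hence FF: "F < F powr (1/\<theta>)" using F2 by simp
  obtain b :: nat where b: "b \<ge> 1"
    "real (b_fold_chromatic (msgs t) (confusable A) b) / real b < F powr (1/\<theta>)"
    using FF unfolding F_def chi_f_confusion_def frac_chromatic_def
    by (subst (asm) cINF_less_iff[OF _ bdd_frac]) auto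
  define K where "K = b_fold_chromatic (msgs t) (confusable A) b"
  have col: "b_fold_colorable (msgs t) (confusable A) b K"
    unfolding K_def by (rule colorable_chrom) (use msgs_finite irrE in auto)
  have K2: "2 * b \<le> K" by (rule colorable_edge_ge[of "msgs t" "confusable A" b K x0 z0]) (use col x0 z0 xz in auto)
  define q where "q = real K / real b"
  have q2: "q \<ge> 2" using K2 b(1) by (simp add: q_def field_simps)
  have "log 2 q < log 2 (F powr (1/\<theta>))"
    using b(2) q2 by (subst log_less_cancel_iff) (auto simp: q_def K_def)
  also have "\<dots> = L / \<theta>" by (simp add: log_powr L_def)
  finally have "\<theta> * log 2 q < L" using th by (simp add: field_simps)
  define g where "g = L - \<theta> * log 2 q"
  have g: "g > 0" using \<open>\<theta> * log 2 q < L\<close> by (simp add: g_def)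
  define T where "T = (\<Sum>i\<in>UNIV. t i)"
  obtain k :: nat where k: "k \<ge> 1" "\<theta> * (log 2 (real k * real T + 1) + 3) \<le> real k * g"
    using asymp_k[OF g th(1)] by blast
  obtain c where c: "\<forall>v\<in>msgs t. c v \<subseteq> {..<K} \<and> card (c v) = b"
     "\<forall>u\<in>msgs t. \<forall>v\<in>msgs t. confusable A u v \<longrightarrow> c u \<inter> c v = {}"
    using col unfolding b_fold_colorable_def by blast
  define Col where "Col = PiE {..<k} (\<lambda>_. {..<K})"
  define c' where "c' x = PiE {..<k} (\<lambda>m. c (blk t m x))" for x
  define V' where "V' = msgs (\<lambda>i. k * t i)"
  have Kp: "K > 0" using K2 b(1) by simp
  have fCol: "finite Col" by (simp add: Col_def finite_PiE)
  have cardCol: "card Col = K ^ k" by (simp add: Col_def card_PiE)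
  have Colne: "Col \<noteq> {}" using Kp by (auto simp: Col_def PiE_eq_empty_iff)
  have c'v: "c' v \<subseteq> Col \<and> card (c' v) = b ^ k" if "v \<in> V'" for v
  proof
    have bm: "\<And>m. m \<in> {..<k} \<Longrightarrow> blk t m v \<in> msgs t" using blk_msgs that by (auto simp: V'_def)
    show "c' v \<subseteq> Col" unfolding c'_def Col_def
      by (rule PiE_mono) (use bm c(1) in blast)
    have "card (c' v) = (\<Prod>m\<in>{..<k}. card (c (blk t m v)))" by (simp add: c'_def card_PiE)
    also have "\<dots> = (\<Prod>m\<in>{..<k}. b)" by (rule prod.cong) (use bm c(1) in auto)
    finally show "card (c' v) = b ^ k" by simp
  qed
  have Bk: "b ^ k \<ge> 1" using b(1) by simp
  have BK: "b ^ k \<le> card Col" unfolding cardCol using K2 by (intro power_mono) auto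
  have cardV': "card V' = 2 ^ (k * T)"
    unfolding V'_def msgs_card T_def by (simp add: sum_distrib_left)
  have "card V' < 2 ^ (k * T + 1)" unfolding cardV' by simp
  then obtain S where S: "S \<subseteq> Col" "card S \<le> nat \<lceil>real (card Col) / real (b ^ k)\<rceil> * (k * T + 1)"
      "\<forall>v\<in>V'. c' v \<inter> S \<noteq> {}"
    using cover_full[of Col "b^k" V' c' V' "k * T + 1"] fCol Colne Bk BK c'v msgs_finite
    unfolding V'_def by blast
  define m where "m = nat \<lceil>real (card Col) / real (b ^ k)\<rceil>"
  define X where "X = m * (k * T + 1)"
  define sel where "sel x = (SOME a. a \<in> c' x \<inter> S)" for x
  have sel: "sel x \<in> c' x \<inter> S" if "x \<in> V'" for x
  proof -
    have "\<exists>a. a \<in> c' x \<inter> S" using S(3) that by blast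
    thus ?thesis unfolding sel_def by (rule someI_ex)
  qed
  have sel_ne: "sel x \<noteq> sel z" if xz': "x \<in> V'" "z \<in> V'" "confusable A x z" for x z
  proof
    assume eq: "sel x = sel z"
    obtain m0 where m0: "m0 < k" "confusable A (blk t m0 x) (blk t m0 z)"
      using blk_conf xz' unfolding V'_def by blast
    have bx: "blk t m0 x \<in> msgs t" and bz: "blk t m0 z \<in> msgs t"
      using blk_msgs m0(1) xz' unfolding V'_def by blast+
    have "sel x m0 \<in> c (blk t m0 x)" using sel[OF xz'(1)] m0(1) by (auto simp: c'_def)
    moreover have "sel z m0 \<in> c (blk t m0 z)" using sel[OF xz'(2)] m0(1) by (auto simp: c'_def)
    moreover have "c (blk t m0 x) \<inter> c (blk t m0 z) = {}" using c(2) bx bz m0(2) by blast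
    ultimately show False using eq by auto
  qed
  have qk: "real (card Col) / real (b ^ k) = q ^ k"
    by (simp add: cardCol q_def power_divide)
  have qk1: "q ^ k \<ge> 1" using q2 by (intro one_le_power) simp
  have c1: "1 \<le> \<lceil>q ^ k\<rceil>" using qk1 by (simp add: le_ceiling_iff)
  have m1: "m \<ge> 1" using c1 unfolding m_def qk by linarith
  have X1: "X \<ge> 1" using m1 by (simp add: X_def)
  define l where "l = log 2 (real X)"
  have l0: "l \<ge> 0" using X1 by (simp add: l_def)
  define r where "r = nat \<lceil>l\<rceil> + 1"
  have "real X = 2 powr l" using X1 by (simp add: l_def)
  also have "\<dots> \<le> 2 powr real (nat \<lceil>l\<rceil>)" by (intro powr_mono) (use l0 in linarith, simp)
  also have "\<dots> = 2 ^ nat \<lceil>l\<rceil>" by (simp add: powr_realpow)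
  also have "\<dots> \<le> 2 ^ r" by (simp add: r_def)
  finally have "real X \<le> 2 ^ r" .
  hence "X \<le> 2 ^ r" by (metis of_nat_le_iff of_nat_numeral of_nat_power)
  hence cS: "card S \<le> 2 ^ r" using S(2) by (simp add: X_def m_def)
  have fS: "finite S" using S(1) fCol finite_subset by blast
  obtain \<phi> \<psi> where code: "index_code A (\<lambda>i. k * t i) r \<phi> \<psi>"
    using coloring_code[OF fS cS _ , of "\<lambda>i. k * t i" sel A] sel sel_ne unfolding V'_def r_def by auto
  have rl: "real r \<le> l + 2" using l0 by (simp add: r_def) linarith
  have "real m = real_of_int \<lceil>q ^ k\<rceil>" using c1 unfolding m_def qk by simp
  hence "real m < q ^ k + 1" using ceiling_correct[of "q ^ k"] by linarith
  hence m2: "real m \<le> 2 * q ^ k" using qk1 by simp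
  have "l = log 2 (real m) + log 2 (real k * real T + 1)"
  proof -
    have "real X = real m * (real k * real T + 1)" by (simp add: X_def algebra_simps)
    moreover have "real m > 0" using m1 by simp
    moreover have "real k * real T + 1 > 0"
    proof -
      have "0 \<le> real k * real T" by simp
      thus ?thesis by linarith
    qed
    ultimately show ?thesis unfolding l_def by (simp add: log_mult)
  qed
  also have "log 2 (real m) \<le> log 2 (2 * q ^ k)"
    using m1 m2 by (subst log_le_cancel_iff) auto
  also have "log 2 (2 * q ^ k) = 1 + real k * log 2 q"
    using q2 by (simp add: log_mult log_nat_power)
  finally have "real r \<le> real k * log 2 q + (log 2 (real k * real T + 1) + 3)" using rl by simp
  hence "\<theta> * real r \<le> \<theta> * (real k * log 2 q) + \<theta> * (log 2 (real k * real T + 1) + 3)"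
    using th(1) by (simp add: distrib_left[symmetric] mult_left_mono)
  also have "\<dots> \<le> \<theta> * (real k * log 2 q) + real k * g" using k(2) by simp
  also have "\<dots> = real k * L" by (simp add: g_def algebra_simps)
  finally show ?thesis using code unfolding L_def F_def by blast
qed



lemma chi_ge2:
  fixes A :: "'n::finite \<Rightarrow> 'n set" and t :: "'n \<Rightarrow> nat"
  assumes irr: "\<And>j. j \<notin> A j" and tnz: "t \<noteq> (\<lambda>_. 0)"
  shows "chi_f_confusion A t \<ge> 2"
proof -
  obtain j0 where j0: "t j0 \<noteq> 0" using tnz by auto
  define x0 where "x0 = (\<lambda>i. replicate (t i) False)"
  define z0 where "z0 = x0(j0 := replicate (t j0) True)"
  have x0: "x0 \<in> msgs t" and z0: "z0 \<in> msgs t" by (auto simp: msgs_def x0_def z0_def)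
  have xz: "confusable A x0 z0"
    unfolding confusable_def
  proof (intro exI[of _ j0] conjI)
    show "x0 j0 \<noteq> z0 j0" using j0 by (cases "t j0") (auto simp: x0_def z0_def)
    show "\<forall>i\<in>A j0. x0 i = z0 i" using irr by (auto simp: z0_def)
  qed
  have irrE: "\<And>v. v \<in> msgs t \<Longrightarrow> \<not> confusable A v v" by (simp add: conf_irrefl)
  show ?thesis unfolding chi_f_confusion_def
    by (rule frac_ge2[of "msgs t" "confusable A" x0 z0]) (use x0 z0 xz msgs_finite irrE in auto)
qed

theorem theorem1:
  fixes A :: "'n::finite \<Rightarrow> 'n set"
  assumes "\<And>j. j \<notin> A j"
  shows "capacity_region A =
    closure {R :: real^'n. (\<forall>j. R $ j \<ge> 0) \<and>
       (\<exists>t :: 'n \<Rightarrow> nat. t \<noteq> (\<lambda>_. 0) \<and>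
          (\<forall>j. R $ j \<le> real (t j) / log 2 (chi_f_confusion A t)))}"
    (is "_ = closure ?S")
proof
  show "capacity_region A \<subseteq> closure ?S"
    unfolding capacity_region_def
  proof (rule closure_mono, rule subsetI)
    fix R :: "real^'n" assume "R \<in> {R. achievable A R}"
    then obtain t r \<phi> \<psi> where R0: "\<forall>j. R $ j \<ge> 0" and code: "index_code A t r \<phi> \<psi>"
      and Rle: "\<forall>j. R $ j \<le> real (t j) / real r"
      unfolding achievable_def by blast
    have rp: "r > 0" using code by (simp add: index_code_def)
    show "R \<in> ?S"
    proof (cases "t = (\<lambda>_. 0)")
      case True
      have "R $ j = 0" for j using R0 Rle True by (metis div_0 of_nat_0 order_antisym)
      moreover have "(\<lambda>_::'n. 1::nat) \<noteq> (\<lambda>_. 0)" by (metis one_neq_zero)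
      moreover have "0 \<le> real 1 / log 2 (chi_f_confusion A (\<lambda>_. 1::nat))"
      proof -
        have "chi_f_confusion A (\<lambda>_. 1::nat) \<ge> 2"
          by (rule chi_ge2[OF assms]) (metis one_neq_zero)
        hence "log 2 (chi_f_confusion A (\<lambda>_. 1::nat)) \<ge> 0" by simp
        thus ?thesis by simp
      qed
      ultimately show ?thesis using R0 by (intro CollectI conjI exI[of _ "\<lambda>_. 1::nat"]) auto
    next
      case False
      define F where "F = chi_f_confusion A t"
      have F2: "F \<ge> 2" unfolding F_def by (rule chi_ge2[OF assms False])
      have "F \<le> real (2 ^ r) / real (1::nat)" unfolding F_def chi_f_confusion_def
        by (rule frac_le[OF code_coloring[OF code]]) simp
      hence Fr: "F \<le> 2 ^ r" by simp
      have "log 2 F \<le> log 2 (2 ^ r)" using Fr F2 by (subst log_le_cancel_iff) auto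
      hence Lr: "log 2 F \<le> real r" by (simp add: log_nat_power)
      have L1: "log 2 F \<ge> 1"
      proof -
        have "log 2 2 \<le> log 2 F" using F2 by (subst log_le_cancel_iff) auto
        thus ?thesis by simp
      qed
      have "R $ j \<le> real (t j) / log 2 (chi_f_confusion A t)" for j
      proof -
        have "real (t j) / real r \<le> real (t j) / log 2 F"
          by (rule divide_left_mono) (use Lr L1 in auto)
        thus ?thesis using Rle unfolding F_def by (meson order_trans)
      qed
      thus ?thesis using R0 False by blast
    qed
  qed
next
  have "?S \<subseteq> capacity_region A"
  proof
    fix R :: "real^'n" assume "R \<in> ?S"
    then obtain t :: "'n \<Rightarrow> nat" where R0: "\<forall>j. R $ j \<ge> 0" and tnz: "t \<noteq> (\<lambda>_. 0)"
      and Rle: "\<forall>j. R $ j \<le> real (t j) / log 2 (chi_f_confusion A t)" by blast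
    define L where "L = log 2 (chi_f_confusion A t)"
    have L1: "L \<ge> 1"
    proof -
      have F2: "chi_f_confusion A t \<ge> 2" by (rule chi_ge2[OF assms tnz])
      have "log 2 2 \<le> log 2 (chi_f_confusion A t)" using F2 by (subst log_le_cancel_iff) auto
      thus ?thesis by (simp add: L_def)
    qed
    define th where "th n = 1 - 1 / (real n + 2)" for n :: nat
    have thp: "0 < th n" "th n < 1" for n by (auto simp: th_def field_simps)
    have ach: "achievable A (th n *\<^sub>R R)" for n
    proof -
      obtain k r \<phi> \<psi> where code: "index_code A (\<lambda>i. k * t i) r \<phi> \<psi>"
        and bnd: "th n * real r \<le> real k * L"
        using achieve[OF assms tnz thp(1)[of n] thp(2)[of n]] unfolding L_def by blast
      have rp: "real r > 0" using code by (simp add: index_code_def)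
      have "(th n *\<^sub>R R) $ j \<le> real (k * t j) / real r" for j
      proof -
        have "(th n *\<^sub>R R) $ j = th n * R $ j" by simp
        also have "\<dots> \<le> th n * (real (t j) / L)"
          using Rle thp(1)[of n] unfolding L_def by (intro mult_left_mono) auto
        also have "\<dots> \<le> real (k * t j) / real r"
        proof -
          have "th n * real r * real (t j) \<le> real k * L * real (t j)"
            by (rule mult_right_mono[OF bnd]) simp
          thus ?thesis using rp L1 by (simp add: field_simps)
        qed
        finally show ?thesis .
      qed
      moreover have "(th n *\<^sub>R R) $ j \<ge> 0" for j using R0 thp(1)[of n] by simp
      ultimately show ?thesis unfolding achievable_def using code by blast
    qed
    have "th \<longlonglongrightarrow> 1" unfolding th_def by real_asymp
    hence "(\<lambda>n. th n *\<^sub>R R) \<longlonglongrightarrow> 1 *\<^sub>R R" by (intro tendsto_scaleR tendsto_const)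
    hence "(\<lambda>n. th n *\<^sub>R R) \<longlonglongrightarrow> R" by simp
    hence "R \<in> closure {R. achievable A R}"
      unfolding closure_sequential using ach by (intro exI[of _ "\<lambda>n. th n *\<^sub>R R"]) auto
    thus "R \<in> capacity_region A" by (simp add: capacity_region_def)
  qed
  thus "closure ?S \<subseteq> capacity_region A"
    unfolding capacity_region_def by (rule closure_minimal) simp
qed

end
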